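(* Let $f:E\to\mathbb{R}$ be either convex or continuously differentiable (possibly non-convex), and let $\varepsilon>0$. Then the iterates of Algorithm UAGMsDR with accuracy $\varepsilon$ satisfy, for every $k\ge0$, $$A_kf(x^k)\le\min_{x\in E}\psi_k(x)+\frac{A_k\varepsilon}{2}=\psi_k(v^k)+\frac{A_k\varepsilon}{2},$$ and $$A_k\ge\sup_{\nu\in[0,1]:\,M_\nu<\infty}\ c_\nu\,\frac{k^{\frac{1+3\nu}{1+\nu}}\,\varepsilon^{\frac{1-\nu}{1+\nu}}}{2^{\frac{1+3\nu}{1+\nu}}\,M_\nu^{\frac{2}{1+\nu}}},\qquad c_\nu=\left[\frac{1+\nu}{1-\nu}\right]^{\frac{1-\nu}{1+\nu}}\ (\nu<1),\ c_1=1.$$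
   Context: $E$ is a finite-dimensional real vector space with a norm $\|\cdot\|$; $E^*$ is its dual, $\langle g,x\rangle$ denotes the value of $g\in E^*$ at $x\in E$, and $\|g\|_*=\max\{\langle g,x\rangle:\|x\|\le 1\}$. For $g\in E^*$, $g^{\#}$ denotes a (fixed) element $s\in E$ with $\|s\|\le 1$ and $\langle g,s\rangle=\|g\|_*$. A prox-function $d:E\to\mathbb{R}$ is continuously differentiable, convex, $1$-strongly convex with respect to $\|\cdot\|$ and satisfies $\min_E d=0$; its Bregman divergence is $V(x,z)=d(x)-d(z)-\langle\nabla d(z),x-z\rangle$. $\nabla f(x)$ denotes the gradient of $f$ if $f$ is differentiable and otherwise a subgradient of the convex function $f$ (as selected by the algorithm). For $\nu\in[0,1]$, $M_\nu\in(0,+\infty]$ denotes the smallest constant such that $\|\nabla f(x)-\nabla f(y)\|_*\le M_\nu\|x-y\|^\nu$ for all $x,y\in E$ (Hölder continuity of the (sub)gradient; $M_\nu=+\infty$ if no such constant exists). Algorithm UAGMsDR (input $x^0\in E$, accuracy $\varepsilon>0$): set $A_0=0$, $v^0=x^0$, $\psi_0(x)=V(x,x^0)$. For $k=0,1,2,\dots$: 1. Choose $\beta_k\in\arg\min_{\beta\in[0,1]}f(v^k+\beta(x^k-v^k))$, set $y^k=v^k+\beta_k(x^k-v^k)$, and choose $\nabla f(y^k)$ (the gradient, or a subgradient in the convex nonsmooth case) such that $\langle\nabla f(y^k),v^k-y^k\rangle\ge0$ (such a choice exists by optimality of $\beta_k$). 2. $h_{k+1}\in\arg\min_{h\ge0}f(y^k-h(\nabla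 f(y^k))^{\#})$, $x^{k+1}=y^k-h_{k+1}(\nabla f(y^k))^{\#}$; $a_{k+1}$ is the largest solution of $f(y^k)-\frac{a_{k+1}^2}{2(A_k+a_{k+1})}\|\nabla f(y^k)\|_*^2+\frac{\varepsilon a_{k+1}}{2(A_k+a_{k+1})}=f(x^{k+1})$. 3. $A_{k+1}=A_k+a_{k+1}$; $\psi_{k+1}(x)=\psi_k(x)+a_{k+1}\{f(y^k)+\langle\nabla f(y^k),x-y^k\rangle\}$; $v^{k+1}=\arg\min_{x\in E}\psi_{k+1}(x)$. All minima are assumed attained, and $\nabla f(y^k)\ne0$ for all iterations considered. *)

theory Defs
  imports "HOL-Analysis.Analysis"
begin

text \<open>E is modelled as a Euclidean space 'a (any finite-dimensional real vector space is
isomorphic to one); the dual space E* is identified with 'a through the inner product,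
so that the pairing is g \<bullet> x. The norm on E is an arbitrary norm nrm, not the Euclidean one.\<close>

definition is_norm :: "('a::real_vector \<Rightarrow> real) \<Rightarrow> bool" where
  "is_norm nrm \<longleftrightarrow> (\<forall>x y. nrm (x + y) \<le> nrm x + nrm y) \<and>
     (\<forall>c x. nrm (c *\<^sub>R x) = \<bar>c\<bar> * nrm x) \<and> (\<forall>x. nrm x = 0 \<longleftrightarrow> x = 0)"

definition dual_norm :: "('a::real_inner \<Rightarrow> real) \<Rightarrow> 'a \<Rightarrow> real" where
  "dual_norm nrm g = Sup {g \<bullet> x | x. nrm x \<le> 1}"

definition C1_fun :: "('a::euclidean_space \<Rightarrow> real) \<Rightarrow> bool" where
  "C1_fun f \<longleftrightarrow> (\<exists>G. (\<forall>x. (f has_derivative (\<lambda>h. G x \<bullet> h)) (at x)) \<and> continuous_on UNIV G)"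

definition subgrads :: "('a::real_inner \<Rightarrow> real) \<Rightarrow> 'a \<Rightarrow> 'a set" where
  "subgrads f x = {g. \<forall>z. f x + g \<bullet> (z - x) \<le> f z}"

definition grads :: "('a::real_inner \<Rightarrow> real) \<Rightarrow> 'a \<Rightarrow> 'a set" where
  "grads f x = {g. (f has_derivative (\<lambda>h. g \<bullet> h)) (at x)}"

definition Dset :: "('a::real_inner \<Rightarrow> real) \<Rightarrow> 'a \<Rightarrow> 'a set" where
  "Dset f x = (if convex_on UNIV f then subgrads f x else grads f x)"

text \<open>Real power t^\<nu> for t \<ge> 0 with the convention 0^0 = 1.\<close>
definition hpow :: "real \<Rightarrow> real \<Rightarrow> real" where
  "hpow t \<nu> = (if \<nu> = 0 then 1 else t powr \<nu>)"

text \<open>Hoelder constant M_\<nu> (smallest constant; +\<infinity> if none exists).\<close>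
definition holder_const ::
  "('a::euclidean_space \<Rightarrow> real) \<Rightarrow> ('a \<Rightarrow> real) \<Rightarrow> real \<Rightarrow> ereal" where
  "holder_const nrm f \<nu> = Inf (ereal ` {M. 0 \<le> M \<and> (\<forall>x y gx gy. gx \<in> Dset f x \<longrightarrow> gy \<in> Dset f y \<longrightarrow>
       dual_norm nrm (gx - gy) \<le> M * hpow (nrm (x - y)) \<nu>)})"

definition bregman :: "('a::real_inner \<Rightarrow> real) \<Rightarrow> ('a \<Rightarrow> 'a) \<Rightarrow> 'a \<Rightarrow> 'a \<Rightarrow> real" where
  "bregman d gd x z = d x - d z - gd z \<bullet> (x - z)"

definition prox_function ::
  "('a::euclidean_space \<Rightarrow> real) \<Rightarrow> ('a \<Rightarrow> real) \<Rightarrow> ('a \<Rightarrow> 'a) \<Rightarrow> bool" where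
  "prox_function nrm d gd \<longleftrightarrow>
     (\<forall>x. (d has_derivative (\<lambda>h. gd x \<bullet> h)) (at x)) \<and> continuous_on UNIV gd \<and>
     convex_on UNIV d \<and>
     (\<forall>x y. d y \<ge> d x + gd x \<bullet> (y - x) + (1/2) * (nrm (y - x))\<^sup>2) \<and>
     (\<exists>z. d z = 0) \<and> (\<forall>z. 0 \<le> d z)"

definition psi_fun ::
  "('a::real_inner \<Rightarrow> real) \<Rightarrow> ('a \<Rightarrow> 'a) \<Rightarrow> ('a \<Rightarrow> real) \<Rightarrow> 'a \<Rightarrow>
   (nat \<Rightarrow> real) \<Rightarrow> (nat \<Rightarrow> 'a) \<Rightarrow> (nat \<Rightarrow> 'a) \<Rightarrow> nat \<Rightarrow> 'a \<Rightarrow> real" where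
  "psi_fun d gd f x0 a y g k z =
     bregman d gd z x0 + (\<Sum>i<k. a (Suc i) * (f (y i) + g i \<bullet> (z - y i)))"

definition c_nu :: "real \<Rightarrow> real" where
  "c_nu \<nu> = (if \<nu> = 1 then 1 else ((1 + \<nu>) / (1 - \<nu>)) powr ((1 - \<nu>) / (1 + \<nu>)))"

definition rate_bound :: "real \<Rightarrow> real \<Rightarrow> real \<Rightarrow> nat \<Rightarrow> real" where
  "rate_bound M \<nu> \<epsilon> k = c_nu \<nu> * (real k powr ((1 + 3*\<nu>) / (1 + \<nu>)) * \<epsilon> powr ((1 - \<nu>) / (1 + \<nu>)))
      / (2 powr ((1 + 3*\<nu>) / (1 + \<nu>)) * M powr (2 / (1 + \<nu>)))"

end

theory Submission
  imports Defs
begin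


lemma nrm_0: "is_norm nrm \<Longrightarrow> nrm 0 = 0"
  unfolding is_norm_def by auto

lemma nrm_minus: "is_norm nrm \<Longrightarrow> nrm (- x) = nrm x"
  unfolding is_norm_def by (metis abs_minus_cancel abs_one mult_1 scaleR_minus1_left)

lemma nrm_nonneg: "is_norm nrm \<Longrightarrow> 0 \<le> nrm x"
proof -
  assume n: "is_norm nrm"
  have "nrm (x + - x) \<le> nrm x + nrm (- x)" using n unfolding is_norm_def by blast
  then show ?thesis using nrm_0[OF n] nrm_minus[OF n, of x] by simp
qed

lemma nrm_scale: "is_norm nrm \<Longrightarrow> nrm (c *\<^sub>R x) = \<bar>c\<bar> * nrm x"
  unfolding is_norm_def by blast

lemma nrm_add: "is_norm nrm \<Longrightarrow> nrm (x + y) \<le> nrm x + nrm y"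
  unfolding is_norm_def by blast

lemma nrm_sum: assumes n: "is_norm nrm" shows "finite S \<Longrightarrow> nrm (\<Sum>i\<in>S. F i) \<le> (\<Sum>i\<in>S. nrm (F i))"
proof (induction S rule: finite_induct)
  case empty then show ?case by (simp add: nrm_0[OF n])
next
  case (insert i S)
  then show ?case using nrm_add[OF n, of "F i" "sum F S"] by simp
qed

lemma nrm_upper:
  fixes nrm :: "'a::euclidean_space \<Rightarrow> real"
  assumes n: "is_norm nrm"
  shows "nrm x \<le> (\<Sum>b\<in>Basis. nrm b) * norm x"
proof -
  have "nrm x = nrm (\<Sum>b\<in>Basis. (x \<bullet> b) *\<^sub>R b)" by (simp add: euclidean_representation)
  also have "\<dots> \<le> (\<Sum>b\<in>Basis. nrm ((x \<bullet> b) *\<^sub>R b))" by (rule nrm_sum[OF n]) simp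
  also have "\<dots> = (\<Sum>b\<in>Basis. \<bar>x \<bullet> b\<bar> * nrm b)" using nrm_scale[OF n] by simp
  also have "\<dots> \<le> (\<Sum>b\<in>Basis. norm x * nrm b)"
    by (intro sum_mono mult_right_mono) (auto simp: Basis_le_norm nrm_nonneg[OF n])
  finally show ?thesis by (simp add: sum_distrib_left mult.commute)
qed

lemma nrm_cont:
  fixes nrm :: "'a::euclidean_space \<Rightarrow> real"
  assumes n: "is_norm nrm"
  shows "continuous_on UNIV nrm"
proof -
  define C where "C = (\<Sum>b\<in>(Basis::'a set). nrm b) + 1"
  have C: "C > 0" unfolding C_def by (simp add: nrm_nonneg[OF n] sum_nonneg add_nonneg_pos)
  have lip: "\<bar>nrm x - nrm y\<bar> \<le> C * norm (x - y)" for x y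
  proof -
    have "nrm x \<le> nrm y + nrm (x - y)" using nrm_add[OF n, of y "x - y"] by simp
    moreover have "nrm y \<le> nrm x + nrm (y - x)" using nrm_add[OF n, of x "y - x"] by simp
    moreover have "nrm (y - x) = nrm (x - y)" using nrm_minus[OF n, of "x - y"] by simp
    moreover have "nrm (x - y) \<le> C * norm (x - y)"
    proof -
      have "(\<Sum>b\<in>(Basis::'a set). nrm b) * norm (x - y) \<le> C * norm (x - y)"
        unfolding C_def by (intro mult_right_mono) auto
      then show ?thesis using nrm_upper[OF n, of "x - y"] by linarith
    qed
    ultimately show ?thesis by linarith
  qed
  show ?thesis
    unfolding continuous_on_iff
  proof (intro ballI allI impI)
    fix x :: 'a and e :: real assume "e > 0"
    show "\<exists>d>0. \<forall>x'\<in>UNIV. dist x' x < d \<longrightarrow> dist (nrm x') (nrm x) < e"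
      apply (rule exI[of _ "e / C"])
      using \<open>e > 0\<close> C lip by (auto simp: dist_norm dist_real_def field_simps intro: le_less_trans)
  qed
qed

lemma nrm_lower:
  fixes nrm :: "'a::euclidean_space \<Rightarrow> real"
  assumes n: "is_norm nrm"
  shows "\<exists>m>0. \<forall>x. m * norm x \<le> nrm x"
proof -
  have "compact (sphere (0::'a) 1)" by simp
  moreover have "sphere (0::'a) 1 \<noteq> {}" by (simp add: sphere_def) (metis norm_Basis SOME_Basis)
  ultimately obtain u where u: "u \<in> sphere 0 1" "\<And>w. w \<in> sphere 0 1 \<Longrightarrow> nrm u \<le> nrm w"
    using continuous_attains_inf[of "sphere (0::'a) 1" nrm] continuous_on_subset[OF nrm_cont[OF n]]
    by blast
  have "u \<noteq> 0" using u(1) by auto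
  then have pos: "nrm u > 0" using n nrm_nonneg[OF n, of u] unfolding is_norm_def
    by (metis less_eq_real_def)
  have "nrm u * norm x \<le> nrm x" for x
  proof (cases "x = 0")
    case True then show ?thesis by (simp add: nrm_0[OF n])
  next
    case False
    have "nrm u \<le> nrm ((1 / norm x) *\<^sub>R x)" using u(2) False by simp
    also have "\<dots> = nrm x / norm x" using nrm_scale[OF n] by simp
    finally show ?thesis using False by (simp add: field_simps)
  qed
  then show ?thesis using pos by blast
qed

lemma dual_bdd:
  fixes nrm :: "'a::euclidean_space \<Rightarrow> real"
  assumes n: "is_norm nrm"
  shows "bdd_above {g \<bullet> x | x. nrm x \<le> 1}"
proof -
  obtain m where m: "m > 0" "\<And>x. m * norm x \<le> nrm x" using nrm_lower[OF n] by blast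
  show ?thesis
  proof (rule bdd_aboveI[of _ "norm g / m"], clarify)
    fix x assume "nrm x \<le> 1"
    then have "norm x \<le> 1 / m" using m by (metis dual_order.trans le_divide_eq mult.commute)
    have "g \<bullet> x \<le> norm g * norm x" by (simp add: norm_cauchy_schwarz)
    also have "\<dots> \<le> norm g * (1 / m)" by (intro mult_left_mono) (use \<open>norm x \<le> 1/m\<close> in auto)
    finally show "g \<bullet> x \<le> norm g / m" by simp
  qed
qed

lemma dual_ineq:
  fixes nrm :: "'a::euclidean_space \<Rightarrow> real"
  assumes n: "is_norm nrm"
  shows "g \<bullet> x \<le> dual_norm nrm g * nrm x"
proof (cases "x = 0")
  case True
  have "0 \<in> {g \<bullet> x | x. nrm x \<le> 1}" using nrm_0[OF n] by (intro CollectI exI[of _ 0]) simp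
  then have "0 \<le> dual_norm nrm g" unfolding dual_norm_def by (rule cSup_upper[OF _ dual_bdd[OF n]])
  then show ?thesis using True by (simp add: nrm_0[OF n])
next
  case False
  then have p: "nrm x > 0" using n nrm_nonneg[OF n, of x] unfolding is_norm_def by (metis less_eq_real_def)
  have "nrm ((1 / nrm x) *\<^sub>R x) \<le> 1" using nrm_scale[OF n] p by simp
  then have "g \<bullet> ((1 / nrm x) *\<^sub>R x) \<in> {g \<bullet> x | x. nrm x \<le> 1}" by blast
  then have "g \<bullet> ((1 / nrm x) *\<^sub>R x) \<le> dual_norm nrm g" unfolding dual_norm_def by (rule cSup_upper[OF _ dual_bdd[OF n]])
  then show ?thesis using p by (simp add: field_simps)
qed

lemma dual_abs:
  fixes nrm :: "'a::euclidean_space \<Rightarrow> real"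
  assumes n: "is_norm nrm"
  shows "\<bar>g \<bullet> x\<bar> \<le> dual_norm nrm g * nrm x"
  using dual_ineq[OF n, of g x] dual_ineq[OF n, of g "- x"] nrm_minus[OF n, of x] by simp

lemma dual_pos:
  fixes nrm :: "'a::euclidean_space \<Rightarrow> real"
  assumes n: "is_norm nrm" and "g \<noteq> 0"
  shows "dual_norm nrm g > 0"
proof -
  have "g \<bullet> g \<le> dual_norm nrm g * nrm g" by (rule dual_ineq[OF n])
  moreover have "g \<bullet> g > 0" using assms by simp
  moreover have "nrm g \<ge> 0" by (rule nrm_nonneg[OF n])
  ultimately show ?thesis by (metis mult_le_0_iff not_le order_less_le_trans)
qed



lemma subgrad_exists:
  fixes f :: "'a::euclidean_space \<Rightarrow> real"
  assumes cvx: "convex_on UNIV f"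
  shows "\<exists>g. g \<in> subgrads f z"
proof -
  define S where "S = {(w, t). f w < t}"
  define T where "T = {(z, f z)}"
  have cS: "convex S" unfolding S_def
  proof (rule convexI)
    fix p1 p2 and u v :: real
    assume h0: "p1 \<in> {(w, t). f w < t}" "p2 \<in> {(w, t). f w < t}" "0 \<le> u" "0 \<le> v" "u + v = 1"
    obtain w1 t1 w2 t2 where pp: "p1 = (w1, t1)" "p2 = (w2, t2)" by fastforce
    have h: "f w1 < t1" "f w2 < t2" "0 \<le> u" "0 \<le> v" "u + v = 1" using h0 pp by auto
    have "f (u *\<^sub>R w1 + v *\<^sub>R w2) \<le> u * f w1 + v * f w2"
      using cvx h unfolding convex_on_def by auto
    also have "\<dots> < u * t1 + v * t2"
    proof (cases "u = 0")
      case True then show ?thesis using h by simp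
    next
      case False
      then have "u * f w1 < u * t1" using h by simp
      moreover have "v * f w2 \<le> v * t2" using h by (simp add: mult_left_mono)
      ultimately show ?thesis by simp
    qed
    finally have "f (u *\<^sub>R w1 + v *\<^sub>R w2) < u * t1 + v * t2" .
    then show "u *\<^sub>R p1 + v *\<^sub>R p2 \<in> {(w, t). f w < t}" using pp by simp
  qed
  have cT: "convex T" unfolding T_def by simp
  have "S \<noteq> {}" unfolding S_def by (auto intro!: exI[of _ z] exI[of _ "f z + 1"])
  moreover have "T \<noteq> {}" "S \<inter> T = {}" unfolding S_def T_def by auto
  ultimately obtain ab b where ab: "ab \<noteq> 0" "\<forall>x\<in>S. ab \<bullet> x \<le> b" "\<forall>x\<in>T. ab \<bullet> x \<ge> b"
    using separating_hyperplane_sets[OF cS cT] by blast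
  obtain a \<alpha> where abd: "ab = (a, \<alpha>)" by (cases ab)
  have key: "a \<bullet> w + \<alpha> * t \<le> a \<bullet> z + \<alpha> * f z" if "f w < t" for w t
  proof -
    have "ab \<bullet> (w, t) \<le> b" using ab(2) that unfolding S_def by auto
    moreover have "ab \<bullet> (z, f z) \<ge> b" using ab(3) unfolding T_def by auto
    ultimately show ?thesis unfolding abd by (simp add: inner_Pair)
  qed
  have "\<alpha> < 0"
  proof (rule ccontr)
    assume "\<not> \<alpha> < 0"
    then have a0: "\<alpha> \<ge> 0" by simp
    show False
    proof (cases "\<alpha> = 0")
      case True
      then have "a \<noteq> 0" using ab(1) abd by (auto simp: zero_prod_def)
      have "a \<bullet> (z + a) \<le> a \<bullet> z" using key[of "z + a" "f (z + a) + 1"] True by simp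
      then show False using \<open>a \<noteq> 0\<close> by (simp add: inner_add_right) (metis inner_gt_zero_iff not_le)
    next
      case False
      then have ap: "\<alpha> > 0" using a0 by simp
      have "a \<bullet> z + \<alpha> * (f z + 1) \<le> a \<bullet> z + \<alpha> * f z" using key[of z "f z + 1"] by simp
      then show False using ap by (simp add: distrib_left)
    qed
  qed
  define g where "g = (- 1 / \<alpha>) *\<^sub>R a"
  have "f z + g \<bullet> (w - z) \<le> f w" for w
  proof (rule dense_ge)
    fix t assume lt: "f w < t"
    have "a \<bullet> w + \<alpha> * t \<le> a \<bullet> z + \<alpha> * f z" by (rule key[OF lt])
    then have "\<alpha> * (t - f z) \<le> - (a \<bullet> (w - z))" by (simp add: inner_diff_right algebra_simps)
    moreover have "\<alpha> * (g \<bullet> (w - z)) = - (a \<bullet> (w - z))" unfolding g_def using \<open>\<alpha> < 0\<close> by simp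
    ultimately have "\<alpha> * (t - f z) \<le> \<alpha> * (g \<bullet> (w - z))" by simp
    then have "g \<bullet> (w - z) \<le> t - f z" using \<open>\<alpha> < 0\<close> by (simp add: mult_le_cancel_left)
    then show "f z + g \<bullet> (w - z) \<le> t" by simp
  qed
  then show ?thesis unfolding subgrads_def by blast
qed


lemma dual_nonneg:
  fixes nrm :: "'a::euclidean_space \<Rightarrow> real"
  assumes n: "is_norm nrm"
  shows "0 \<le> dual_norm nrm g"
proof -
  have "0 \<in> {g \<bullet> x | x. nrm x \<le> 1}" using nrm_0[OF n] by (intro CollectI exI[of _ 0]) simp
  then show ?thesis unfolding dual_norm_def by (rule cSup_upper[OF _ dual_bdd[OF n]])
qed

lemma hpow_le: "0 \<le> b \<Longrightarrow> b \<le> x \<Longrightarrow> 0 < x \<Longrightarrow> 0 \<le> \<nu> \<Longrightarrow> hpow b \<nu> \<le> x powr \<nu>"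
  unfolding hpow_def by (auto intro: powr_mono2)

lemma mono_core:
  fixes \<phi> \<phi>' :: "real \<Rightarrow> real"
  assumes der: "\<And>x. (\<phi> has_real_derivative \<phi>' x) (at x)"
    and bd: "\<And>x. 0 < x \<Longrightarrow> \<phi>' x + c \<le> M * x powr \<nu>"
    and t: "0 \<le> t" and nu: "0 \<le> \<nu>"
  shows "\<phi> t \<le> \<phi> 0 - t * c + M * t powr (1 + \<nu>) / (1 + \<nu>)"
proof -
  define \<psi> where "\<psi> x = \<phi> x + x * c - M * x powr (1 + \<nu>) / (1 + \<nu>)" for x
  have "\<psi> 0 \<ge> \<psi> t"
  proof (rule DERIV_nonpos_imp_decreasing_open[OF t])
    fix x :: real assume x: "0 < x" "x < t"
    have "(\<psi> has_real_derivative (\<phi>' x + c - M * ((1 + \<nu>) * x powr (1 + \<nu> - 1)) / (1 + \<nu>))) (at x)"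
    proof -
      have d1: "(\<phi> has_real_derivative \<phi>' x) (at x)" by (rule der)
      have d2: "((\<lambda>x. x powr (1 + \<nu>)) has_real_derivative (1 + \<nu>) * x powr (1 + \<nu> - 1)) (at x)"
        by (rule has_real_derivative_powr[OF x(1)])
      have d3: "((\<lambda>x. x * c) has_real_derivative c) (at x)"
        using DERIV_cmult_right[OF DERIV_ident, of c x] by simp
      have "((\<lambda>x. \<phi> x + x * c - M * x powr (1 + \<nu>) / (1 + \<nu>)) has_real_derivative
             (\<phi>' x + c - M * ((1 + \<nu>) * x powr (1 + \<nu> - 1)) / (1 + \<nu>))) (at x)"
        using DERIV_diff[OF DERIV_add[OF d1 d3] DERIV_cdivide[OF DERIV_cmult[OF d2, of M], of "1 + \<nu>"]]
        by simp
      then show ?thesis unfolding \<psi>_def .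
    qed
    moreover have "\<phi>' x + c - M * ((1 + \<nu>) * x powr (1 + \<nu> - 1)) / (1 + \<nu>) \<le> 0"
      using bd[OF x(1)] nu by simp
    ultimately show "\<exists>y. (\<psi> has_real_derivative y) (at x) \<and> y \<le> 0" by blast
  next
    have "continuous_on {0..t} \<phi>"
      using der by (meson DERIV_isCont continuous_at_imp_continuous_on)
    moreover have "continuous_on {0..t} (\<lambda>x. x powr (1 + \<nu>))"
      by (intro continuous_on_powr') (use nu in \<open>auto intro!: continuous_intros\<close>)
    moreover have "continuous_on {0..t} (\<lambda>x::real. x * c)" by (intro continuous_intros)
    ultimately show "continuous_on {0..t} \<psi>" unfolding \<psi>_def
      using nu by (intro continuous_on_diff continuous_on_add continuous_on_divide continuous_on_mult_left continuous_on_const) auto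
  qed
  then show ?thesis unfolding \<psi>_def using nu by simp
qed

lemma descent_C1:
  fixes nrm f :: "'a::euclidean_space \<Rightarrow> real"
  assumes n: "is_norm nrm" and C1: "C1_fun f"
    and H: "\<And>x y gx gy. gx \<in> grads f x \<Longrightarrow> gy \<in> grads f y \<Longrightarrow>
              dual_norm nrm (gx - gy) \<le> M * hpow (nrm (x - y)) \<nu>"
    and M: "0 \<le> M" and nu: "0 \<le> \<nu>"
    and g: "g \<in> grads f y" and s: "nrm s \<le> 1" and t: "0 \<le> t"
  shows "f (y - t *\<^sub>R s) \<le> f y - t * (g \<bullet> s) + M * t powr (1 + \<nu>) / (1 + \<nu>)"
proof -
  obtain G where G: "\<And>x. (f has_derivative (\<lambda>h. G x \<bullet> h)) (at x)"
    using C1 unfolding C1_fun_def by blast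
  define \<phi> where "\<phi> u = f (y - u *\<^sub>R s)" for u
  define \<phi>' where "\<phi>' u = - (G (y - u *\<^sub>R s) \<bullet> s)" for u
  have der: "(\<phi> has_real_derivative \<phi>' u) (at u)" for u
  proof -
    have "((\<lambda>u. y - u *\<^sub>R s) has_derivative (\<lambda>h. - (h *\<^sub>R s))) (at u)"
      by (intro derivative_eq_intros) auto
    from has_derivative_compose[OF this G]
    have "(\<phi> has_derivative (\<lambda>h. G (y - u *\<^sub>R s) \<bullet> (- (h *\<^sub>R s)))) (at u)"
      unfolding \<phi>_def by (simp add: o_def)
    moreover have "(\<lambda>h. G (y - u *\<^sub>R s) \<bullet> (- (h *\<^sub>R s))) = (\<lambda>h. \<phi>' u * h)"
      unfolding \<phi>'_def by (auto simp: algebra_simps)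
    ultimately show ?thesis unfolding has_field_derivative_def by simp
  qed
  have bd: "\<phi>' x + g \<bullet> s \<le> M * x powr \<nu>" if x: "0 < x" for x
  proof -
    let ?z = "y - x *\<^sub>R s"
    have Gz: "G ?z \<in> grads f ?z" using G unfolding grads_def by blast
    have "\<phi>' x + g \<bullet> s = (g - G ?z) \<bullet> s" unfolding \<phi>'_def by (simp add: inner_diff_left)
    also have "\<dots> \<le> dual_norm nrm (g - G ?z) * nrm s" by (rule dual_ineq[OF n])
    also have "\<dots> \<le> dual_norm nrm (g - G ?z)"
      using s dual_nonneg[OF n] by (simp add: mult_left_le)
    also have "\<dots> \<le> M * hpow (nrm (y - ?z)) \<nu>" by (rule H[OF g Gz])
    also have "\<dots> \<le> M * x powr \<nu>"
    proof (intro mult_left_mono M hpow_le)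
      show "nrm (y - ?z) \<le> x" using nrm_scale[OF n, of x s] s x
        by (simp add: mult_left_le)
    qed (use x nu nrm_nonneg[OF n] in auto)
    finally show ?thesis .
  qed
  from mono_core[of \<phi> \<phi>' "g \<bullet> s" M \<nu> t, OF der bd t nu]
  show ?thesis unfolding \<phi>_def by simp
qed



lemma quot_bound:
  fixes X h a b :: real
  assumes "0 \<le> X" "X \<le> h * (a - b)" "h \<noteq> 0"
  shows "\<bar>X / h\<bar> \<le> \<bar>a - b\<bar>"
proof -
  have "\<bar>X\<bar> \<le> \<bar>h\<bar> * \<bar>a - b\<bar>" using assms by (simp add: abs_mult[symmetric])
  then show ?thesis using assms(3) by (simp add: divide_le_eq mult.commute)
qed

lemma descent_convex:
  fixes nrm f :: "'a::euclidean_space \<Rightarrow> real"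
  assumes n: "is_norm nrm" and cvx: "convex_on UNIV f"
    and H: "\<And>x y gx gy. gx \<in> subgrads f x \<Longrightarrow> gy \<in> subgrads f y \<Longrightarrow>
              dual_norm nrm (gx - gy) \<le> M * hpow (nrm (x - y)) \<nu>"
    and M: "0 \<le> M" and nu: "0 \<le> \<nu>"
    and g: "g \<in> subgrads f y" and s: "nrm s \<le> 1" and t: "0 \<le> t"
  shows "f (y - t *\<^sub>R s) \<le> f y - t * (g \<bullet> s) + M * t powr (1 + \<nu>) / (1 + \<nu>)"
proof -
  define D where "D p = (SOME g. g \<in> subgrads f p)" for p
  have Dp: "D p \<in> subgrads f p" for p
    unfolding D_def using subgrad_exists[OF cvx] by (meson someI_ex)
  have sub: "f p + D p \<bullet> (q - p) \<le> f q" for p q using Dp[of p] unfolding subgrads_def by blast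
  have pair: "\<bar>(gp - gq) \<bullet> s\<bar> \<le> M * hpow (nrm (p - q)) \<nu>"
    if "gp \<in> subgrads f p" "gq \<in> subgrads f q" for p q gp gq
  proof -
    have "\<bar>(gp - gq) \<bullet> s\<bar> \<le> dual_norm nrm (gp - gq) * nrm s" by (rule dual_abs[OF n])
    also have "\<dots> \<le> dual_norm nrm (gp - gq)" using s dual_nonneg[OF n] by (simp add: mult_left_le)
    also have "\<dots> \<le> M * hpow (nrm (p - q)) \<nu>" by (rule H[OF that])
    finally show ?thesis .
  qed
  have nz: "nrm (y - (y - x *\<^sub>R s)) \<le> \<bar>x\<bar>" for x
    using nrm_scale[OF n, of x s] s by (simp add: mult_left_le)
  show ?thesis
  proof (cases "\<nu> = 0")
    case True
    let ?z = "y - t *\<^sub>R s"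
    have "f ?z + D ?z \<bullet> (y - ?z) \<le> f y" by (rule sub)
    moreover have "D ?z \<bullet> (y - ?z) = t * (D ?z \<bullet> s)" by simp
    moreover have "(g - D ?z) \<bullet> s \<le> M"
      using pair[OF g Dp[of ?z]] True unfolding hpow_def by simp
    then have "g \<bullet> s - M \<le> D ?z \<bullet> s" by (simp add: inner_diff_left)
    then have "t * (g \<bullet> s - M) \<le> t * (D ?z \<bullet> s)" using t by (rule mult_left_mono)
    ultimately have "f ?z \<le> f y - t * (g \<bullet> s) + t * M"
      by (simp add: right_diff_distrib)
    then show ?thesis using True t by (simp add: mult.commute)
  next
    case False
    then have nup: "\<nu> > 0" using nu by simp
    define \<phi> where "\<phi> u = f (y - u *\<^sub>R s)" for u
    define \<phi>' where "\<phi>' u = - (D (y - u *\<^sub>R s) \<bullet> s)" for u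
    have der: "(\<phi> has_real_derivative \<phi>' u) (at u)" for u
    proof -
      have "((\<lambda>w. (\<phi> w - \<phi> u) / (w - u) - \<phi>' u) \<longlongrightarrow> 0) (at u)"
      proof (rule Lim_null_comparison)
        show "\<forall>\<^sub>F w in at u. norm ((\<phi> w - \<phi> u) / (w - u) - \<phi>' u) \<le> M * \<bar>w - u\<bar> powr \<nu>"
          unfolding eventually_at_filter
        proof (intro always_eventually allI impI)
          fix w assume "w \<noteq> u"
          let ?h = "w - u" and ?a = "D (y - u *\<^sub>R s) \<bullet> s" and ?b = "D (y - w *\<^sub>R s) \<bullet> s"
          have i: "\<phi> w - \<phi> u + ?h * ?a \<ge> 0"
            using sub[of "y - u *\<^sub>R s" "y - w *\<^sub>R s"] unfolding \<phi>_def
            by (simp add: inner_diff_right algebra_simps)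
          have ii: "\<phi> w - \<phi> u + ?h * ?a \<le> ?h * (?a - ?b)"
            using sub[of "y - w *\<^sub>R s" "y - u *\<^sub>R s"] unfolding \<phi>_def
            by (simp add: inner_diff_right algebra_simps)
          have "(\<phi> w - \<phi> u) / (w - u) - \<phi>' u = (\<phi> w - \<phi> u + ?h * ?a) / ?h"
            unfolding \<phi>'_def using \<open>w \<noteq> u\<close> by (simp add: field_simps)
          then have "\<bar>(\<phi> w - \<phi> u) / (w - u) - \<phi>' u\<bar> \<le> \<bar>?a - ?b\<bar>"
            using quot_bound[OF i ii] \<open>w \<noteq> u\<close> by simp
          also have "\<dots> \<le> M * hpow (nrm ((y - u *\<^sub>R s) - (y - w *\<^sub>R s))) \<nu>"
            using pair[OF Dp[of "y - u *\<^sub>R s"] Dp[of "y - w *\<^sub>R s"]] by (simp only: inner_diff_left)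
          also have "\<dots> \<le> M * \<bar>w - u\<bar> powr \<nu>"
          proof (intro mult_left_mono M)
            have "nrm ((y - u *\<^sub>R s) - (y - w *\<^sub>R s)) = \<bar>w - u\<bar> * nrm s"
              using nrm_scale[OF n, of "w - u" s] by (simp add: algebra_simps)
            also have "\<dots> \<le> \<bar>w - u\<bar>" using s by (simp add: mult_left_le)
            finally show "hpow (nrm ((y - u *\<^sub>R s) - (y - w *\<^sub>R s))) \<nu> \<le> \<bar>w - u\<bar> powr \<nu>"
              using nup \<open>w \<noteq> u\<close> nrm_nonneg[OF n] unfolding hpow_def by (auto intro: powr_mono2)
          qed
          finally show "norm ((\<phi> w - \<phi> u) / (w - u) - \<phi>' u) \<le> M * \<bar>w - u\<bar> powr \<nu>" by simp
        qed
      next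
        have "((\<lambda>w. w - u) \<longlongrightarrow> 0) (at u)" by (rule LIM_zero[OF tendsto_ident_at])
        then have "((\<lambda>w. \<bar>w - u\<bar> powr \<nu>) \<longlongrightarrow> 0) (at u)"
          using nup by (intro tendsto_zero_powrI tendsto_rabs_zero) auto
        then show "((\<lambda>w. M * \<bar>w - u\<bar> powr \<nu>) \<longlongrightarrow> 0) (at u)"
          by (rule tendsto_mult_right_zero)
      qed
      then show ?thesis unfolding has_field_derivative_iff by (rule LIM_zero_cancel)
    qed
    have bd: "\<phi>' x + g \<bullet> s \<le> M * x powr \<nu>" if x: "0 < x" for x
    proof -
      let ?z = "y - x *\<^sub>R s"
      have "\<phi>' x + g \<bullet> s = (g - D ?z) \<bullet> s" unfolding \<phi>'_def by (simp add: inner_diff_left)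
      also have "\<dots> \<le> M * hpow (nrm (y - ?z)) \<nu>" using pair[OF g Dp[of ?z]] by simp
      also have "\<dots> \<le> M * x powr \<nu>"
        by (intro mult_left_mono M hpow_le) (use x nu nrm_nonneg[OF n] nz[of x] in auto)
      finally show ?thesis .
    qed
    from mono_core[of \<phi> \<phi>' "g \<bullet> s" M \<nu> t, OF der bd t nu]
    show ?thesis unfolding \<phi>_def by simp
  qed
qed



lemma sc_min:
  fixes nrm d :: "'a::euclidean_space \<Rightarrow> real"
  assumes n: "is_norm nrm" and prox: "prox_function nrm d gd"
    and phi: "\<And>z. \<phi> z = d z + l \<bullet> z + c"
    and min: "\<And>z. \<phi> v \<le> \<phi> z"
  shows "\<phi> v + (1/2) * (nrm (z - v))\<^sup>2 \<le> \<phi> z"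
proof (rule ccontr)
  assume "\<not> ?thesis"
  then have lt: "\<phi> z - \<phi> v < (1/2) * (nrm (z - v))\<^sup>2" by simp
  define N where "N = nrm (z - v)"
  define \<Delta> where "\<Delta> = \<phi> z - \<phi> v"
  have D0: "\<Delta> \<ge> 0" unfolding \<Delta>_def using min[of z] by simp
  have "(1/2) * N\<^sup>2 > 0" using lt D0 unfolding N_def \<Delta>_def by linarith
  then have N2: "N\<^sup>2 > 0" by simp
  define t where "t = ((1/2) * N\<^sup>2 - \<Delta>) / N\<^sup>2"
  have t: "0 < t" "t < 1" unfolding t_def using lt N2 D0 unfolding N_def \<Delta>_def by (auto simp: field_simps)
  define w where "w = z - v"
  define u where "u = v + t *\<^sub>R w"
  have strong: "\<And>x y. d y \<ge> d x + gd x \<bullet> (y - x) + (1/2) * (nrm (y - x))\<^sup>2"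
    using prox unfolding prox_function_def by blast
  have s1: "d v \<ge> d u + gd u \<bullet> (v - u) + (1/2) * (nrm (v - u))\<^sup>2" by (rule strong)
  have s2: "d z \<ge> d u + gd u \<bullet> (z - u) + (1/2) * (nrm (z - u))\<^sup>2" by (rule strong)
  have vu: "v - u = (- t) *\<^sub>R w" and zu: "z - u = (1 - t) *\<^sub>R w" unfolding u_def w_def by (auto simp: algebra_simps)
  have nvu: "nrm (v - u) = t * N" and nzu: "nrm (z - u) = (1 - t) * N"
    unfolding vu zu N_def w_def[symmetric] using nrm_scale[OF n, of "- t" w] nrm_scale[OF n, of "1 - t" w] t
    by (auto simp del: scaleR_minus_left)
  define X where "X = gd u \<bullet> w"
  have i1: "gd u \<bullet> (v - u) = - t * X" and i2: "gd u \<bullet> (z - u) = (1 - t) * X" unfolding vu zu X_def by auto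
  have s1': "d v \<ge> d u - t * X + (1/2) * (t * N)\<^sup>2" using s1 i1 nvu by simp
  have s2': "d z \<ge> d u + (1 - t) * X + (1/2) * ((1 - t) * N)\<^sup>2" using s2 i2 nzu by simp
  have comb: "(1 - t) * d v + t * d z \<ge> d u + (1/2) * t * (1 - t) * N\<^sup>2"
  proof -
    have "(1 - t) * d v \<ge> (1 - t) * (d u - t * X + (1/2) * (t * N)\<^sup>2)"
      using s1' t by (intro mult_left_mono) auto
    moreover have "t * d z \<ge> t * (d u + (1 - t) * X + (1/2) * ((1 - t) * N)\<^sup>2)"
      using s2' t by (intro mult_left_mono) auto
    moreover have "(1 - t) * (d u - t * X + (1/2) * (t * N)\<^sup>2) + t * (d u + (1 - t) * X + (1/2) * ((1 - t) * N)\<^sup>2)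
        = d u + (1/2) * t * (1 - t) * N\<^sup>2"
      by (simp add: field_simps power2_eq_square)
    ultimately show ?thesis by linarith
  qed
  have lin: "l \<bullet> u = (1 - t) * (l \<bullet> v) + t * (l \<bullet> z)"
    unfolding u_def w_def by (simp add: inner_add_right inner_diff_right algebra_simps)
  have "(1 - t) * \<phi> v + t * \<phi> z \<ge> \<phi> u + (1/2) * t * (1 - t) * N\<^sup>2"
    using comb lin unfolding phi by (simp add: algebra_simps)
  moreover have "\<phi> u \<ge> \<phi> v" by (rule min)
  ultimately have "t * \<Delta> \<ge> t * ((1/2) * (1 - t) * N\<^sup>2)" unfolding \<Delta>_def by (simp add: algebra_simps)
  then have "\<Delta> \<ge> (1/2) * (1 - t) * N\<^sup>2" using t by simp
  moreover have "(1/2) * (1 - t) * N\<^sup>2 = (1/4) * N\<^sup>2 + \<Delta> / 2" unfolding t_def using N2 by (simp add: field_simps)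
  ultimately have "(1/4) * N\<^sup>2 + \<Delta> / 2 \<le> \<Delta>" by linarith
  then have "\<Delta> \<ge> (1/2) * N\<^sup>2" by linarith
  then show False using lt unfolding \<Delta>_def N_def by linarith
qed

lemma psi_affine:
  "\<exists>l c. \<forall>z. psi_fun d gd f x0 a y g k z = d z + l \<bullet> z + c"
proof (induction k)
  case 0
  show ?case
    by (rule exI[of _ "- gd x0"], rule exI[of _ "gd x0 \<bullet> x0 - d x0"])
       (simp add: psi_fun_def bregman_def inner_diff_right)
next
  case (Suc k)
  then obtain l c where lc: "\<forall>z. psi_fun d gd f x0 a y g k z = d z + l \<bullet> z + c" by blast
  show ?case
    apply (rule exI[of _ "l + a (Suc k) *\<^sub>R g k"], rule exI[of _ "c + a (Suc k) * (f (y k) - g k \<bullet> y k)"])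
    using lc by (simp add: psi_fun_def inner_add_left inner_diff_right algebra_simps)
qed



lemma eq_mult:
  fixes A b Fy Fx G \<epsilon> :: real
  assumes "A + b \<noteq> 0"
  shows "(Fy - b\<^sup>2 / (2 * (A + b)) * G\<^sup>2 + \<epsilon> * b / (2 * (A + b)) = Fx)
     \<longleftrightarrow> b\<^sup>2 * G\<^sup>2 = 2 * (A + b) * (Fy - Fx) + \<epsilon> * b"
proof -
  define P where "P = A + b"
  have P: "P \<noteq> 0" using assms unfolding P_def .
  have e: "Fy - b\<^sup>2 / (2 * P) * G\<^sup>2 + \<epsilon> * b / (2 * P) = (2 * P * Fy - b\<^sup>2 * G\<^sup>2 + \<epsilon> * b) / (2 * P)"
    using P by (simp add: field_simps)
  have "((2 * P * Fy - b\<^sup>2 * G\<^sup>2 + \<epsilon> * b) / (2 * P) = Fx) \<longleftrightarrow> (2 * P * Fy - b\<^sup>2 * G\<^sup>2 + \<epsilon> * b = Fx * (2 * P))"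
    using P by (simp add: divide_eq_eq)
  also have "\<dots> \<longleftrightarrow> b\<^sup>2 * G\<^sup>2 = 2 * P * (Fy - Fx) + \<epsilon> * b" by (auto simp: algebra_simps)
  finally show ?thesis using e unfolding P_def by simp
qed

lemma root_pos:
  fixes A Fy Fx G \<epsilon> :: real
  assumes A: "A \<ge> 0" and F: "Fx \<le> Fy" and G: "G > 0" and eps: "\<epsilon> > 0"
  shows "\<exists>b>0. A + b \<noteq> 0 \<and> Fy - b\<^sup>2 / (2 * (A + b)) * G\<^sup>2 + \<epsilon> * b / (2 * (A + b)) = Fx"
proof -
  define F where "F = Fy - Fx"
  define c where "c = 2 * F + \<epsilon>"
  define D where "D = c\<^sup>2 + 8 * A * F * G\<^sup>2"
  define s where "s = sqrt D"
  define b where "b = (c + s) / (2 * G\<^sup>2)"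
  have Fn: "F \<ge> 0" unfolding F_def using F by simp
  have c: "c > 0" unfolding c_def using Fn eps by simp
  have D: "D \<ge> 0" unfolding D_def using A Fn by simp
  have s: "s \<ge> 0" "s\<^sup>2 = D" unfolding s_def using D by auto
  have b: "b > 0" unfolding b_def using c s G by simp
  have "b\<^sup>2 * G\<^sup>2 = 2 * (A + b) * F + \<epsilon> * b"
  proof -
    have "4 * G\<^sup>2 * (b\<^sup>2 * G\<^sup>2) = (c + s)\<^sup>2" unfolding b_def using G by (simp add: field_simps power2_eq_square)
    moreover have "4 * G\<^sup>2 * (2 * (A + b) * F + \<epsilon> * b) = 8 * A * F * G\<^sup>2 + 2 * c * (c + s)"
      unfolding b_def c_def using G by (simp add: field_simps power2_eq_square)
    moreover have "(c + s)\<^sup>2 = 8 * A * F * G\<^sup>2 + 2 * c * (c + s)"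
      using s(2) unfolding D_def by (simp add: power2_eq_square algebra_simps)
    ultimately have "4 * G\<^sup>2 * (b\<^sup>2 * G\<^sup>2) = 4 * G\<^sup>2 * (2 * (A + b) * F + \<epsilon> * b)" by simp
    then show ?thesis using G by simp
  qed
  moreover have "A + b \<noteq> 0" using A b by simp
  ultimately show ?thesis using b eq_mult[of A b Fy G \<epsilon> Fx] unfolding F_def by auto
qed



lemma step_rate:
  fixes a A' G F \<epsilon> M \<nu> :: real
  assumes a: "a > 0" and A': "A' > 0" and G: "G > 0" and eps: "\<epsilon> > 0" and M: "M > 0"
    and nu: "0 \<le> \<nu>" "\<nu> \<le> 1"
    and eq: "a\<^sup>2 * G\<^sup>2 = 2 * A' * F + \<epsilon> * a"
    and desc: "\<And>t. t \<ge> 0 \<Longrightarrow> t * G - M * t powr (1 + \<nu>) / (1 + \<nu>) \<le> F"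
  shows "c_nu \<nu> * \<epsilon> powr ((1 - \<nu>) / (1 + \<nu>)) / M powr (2 / (1 + \<nu>))
           * A' powr (1 - (1 - \<nu>) / (1 + \<nu>)) \<le> a powr (2 - (1 - \<nu>) / (1 + \<nu>))"
proof -
  define \<tau> where "\<tau> = a\<^sup>2 / A'"
  define X where "X = a / A'"
  have tau: "\<tau> > 0" "X > 0" unfolding \<tau>_def X_def using a A' by auto
  have eq': "\<tau> * G\<^sup>2 = 2 * F + \<epsilon> * X"
    unfolding \<tau>_def X_def using eq A' by (simp add: field_simps)
  have "\<tau> * G * G - M * (\<tau> * G) powr (1 + \<nu>) / (1 + \<nu>) \<le> F"
    using desc[of "\<tau> * G"] tau G by simp
  then have ineq0: "\<tau> * G\<^sup>2 + \<epsilon> * X \<le> 2 * (M * (\<tau> * G) powr (1 + \<nu>) / (1 + \<nu>))"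
    using eq' by (simp only: power2_eq_square mult.assoc)
  have lt: "ln \<tau> = 2 * ln a - ln A'" "ln X = ln a - ln A'"
    unfolding \<tau>_def X_def using a A' by (simp_all add: ln_div ln_mult power2_eq_square)
  show ?thesis
  proof (cases "\<nu> = 1")
    case True
    have "\<tau> * G\<^sup>2 + \<epsilon> * X \<le> M * (\<tau> * G)\<^sup>2"
      using ineq0 True tau G by (simp add: powr_numeral)
    then have "\<tau> * G\<^sup>2 + \<epsilon> * X \<le> M * (\<tau>\<^sup>2 * G\<^sup>2)" by (simp add: power_mult_distrib)
    then have "\<tau> * G\<^sup>2 < M * (\<tau>\<^sup>2 * G\<^sup>2)" using mult_pos_pos[OF eps tau(2)] by linarith
    then have "\<tau> * G\<^sup>2 < M * \<tau>\<^sup>2 * G\<^sup>2" by (simp add: mult.assoc)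
    then have "1 < M * \<tau>" using tau G by (simp add: power2_eq_square field_simps)
    then have "A' / M \<le> a\<^sup>2" unfolding \<tau>_def using A' M by (simp add: field_simps)
    then show ?thesis using True a A' M eps by (simp add: c_nu_def powr_numeral)
  next
    case False
    then have nu1: "\<nu> < 1" using nu by simp
    define \<theta> where "\<theta> = (1 + \<nu>) / 2"
    have th: "0 < \<theta>" "\<theta> < 1" "1/2 \<le> \<theta>" unfolding \<theta>_def using nu nu1 by auto
    have young: "(\<tau> * G\<^sup>2 / \<theta>) powr \<theta> * (\<epsilon> * X / (1 - \<theta>)) powr (1 - \<theta>)
        \<le> \<theta> * (\<tau> * G\<^sup>2 / \<theta>) + (1 - \<theta>) * (\<epsilon> * X / (1 - \<theta>))"
      by (rule Youngs_inequality_0) (use th tau G eps in auto)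
    also have "\<dots> = \<tau> * G\<^sup>2 + \<epsilon> * X" using th by simp
    also have "\<dots> \<le> 2 * (M * (\<tau> * G) powr (1 + \<nu>) / (1 + \<nu>))" by (rule ineq0)
    also have "\<dots> = M * (\<tau> * G) powr (2 * \<theta>) / \<theta>"
    proof -
      have e2: "1 + \<nu> = 2 * \<theta>" unfolding \<theta>_def by simp
      show ?thesis unfolding e2 using th(1) by simp
    qed
    finally have Y: "(\<tau> * G\<^sup>2 / \<theta>) powr \<theta> * (\<epsilon> * X / (1 - \<theta>)) powr (1 - \<theta>)
        \<le> M * (\<tau> * G) powr (2 * \<theta>) / \<theta>" .
    have pos1: "0 < (\<tau> * G\<^sup>2 / \<theta>) powr \<theta> * (\<epsilon> * X / (1 - \<theta>)) powr (1 - \<theta>)"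
      using th tau G eps by simp
    have L: "\<theta> * (ln \<tau> + 2 * ln G - ln \<theta>) + (1 - \<theta>) * (ln \<epsilon> + ln X - ln (1 - \<theta>))
        \<le> ln M + 2 * \<theta> * (ln \<tau> + ln G) - ln \<theta>"
    proof -
      have "ln ((\<tau> * G\<^sup>2 / \<theta>) powr \<theta> * (\<epsilon> * X / (1 - \<theta>)) powr (1 - \<theta>))
          \<le> ln (M * (\<tau> * G) powr (2 * \<theta>) / \<theta>)"
        using Y pos1 by simp
      then show ?thesis using th tau G eps M
        by (simp add: ln_mult ln_div ln_powr power2_eq_square algebra_simps)
    qed
    define la lA lt le lM lth lth1 where "la = ln a" "lA = ln A'" "lt = ln \<tau>" "le = ln \<epsilon>"
      "lM = ln M" "lth = ln \<theta>" "lth1 = ln (1 - \<theta>)"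
    have key: "(1 - \<theta>) * (lth - lth1) + (1 - \<theta>) * le - lM + (2 * \<theta> - 1) * lA \<le> (3 * \<theta> - 1) * la"
    proof -
      have "\<theta> * (2 * la - lA + 2 * ln G - lth) + (1 - \<theta>) * (le + (la - lA) - lth1)
        \<le> lM + 2 * \<theta> * (2 * la - lA + ln G) - lth"
        using L lt unfolding la_lA_lt_le_lM_lth_lth1_def by simp
      then show ?thesis by (simp add: algebra_simps)
    qed
    have cnu: "c_nu \<nu> = (\<theta> / (1 - \<theta>)) powr ((1 - \<nu>) / (1 + \<nu>))"
    proof -
      have tq: "\<theta> / (1 - \<theta>) = (1 + \<nu>) / (1 - \<nu>)"
        unfolding \<theta>_def using nu1 by (simp add: field_simps)
      show ?thesis unfolding c_nu_def tq using False by simp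
    qed
    define q where "q = (1 - \<nu>) / (1 + \<nu>)"
    have q: "\<theta> * q = 1 - \<theta>" "\<theta> * (2 / (1 + \<nu>)) = 1" unfolding q_def \<theta>_def using nu by (auto simp: field_simps)
    have lhs_pos: "0 < c_nu \<nu> * \<epsilon> powr q / M powr (2 / (1 + \<nu>)) * A' powr (1 - q)"
      using cnu th eps M A' by simp
    have "\<theta> * ln (c_nu \<nu> * \<epsilon> powr q / M powr (2 / (1 + \<nu>)) * A' powr (1 - q))
        = \<theta> * q * (lth - lth1) + \<theta> * q * le - \<theta> * (2 / (1 + \<nu>)) * lM + (\<theta> - \<theta> * q) * lA"
      unfolding cnu la_lA_lt_le_lM_lth_lth1_def q_def[symmetric] using th eps M A'
      by (simp add: ln_mult ln_div ln_powr algebra_simps)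
    also have "\<dots> = (1 - \<theta>) * (lth - lth1) + (1 - \<theta>) * le - lM + (2 * \<theta> - 1) * lA"
      by (simp only: q) (simp add: algebra_simps)
    also have "\<dots> \<le> (3 * \<theta> - 1) * la" by (rule key)
    also have "\<dots> = \<theta> * (2 - q) * la"
    proof -
      have "\<theta> * (2 - q) = 3 * \<theta> - 1" using q(1) by (simp add: right_diff_distrib)
      then show ?thesis by simp
    qed
    also have "\<dots> = \<theta> * ln (a powr (2 - q))"
      unfolding la_lA_lt_le_lM_lth_lth1_def using a by (simp add: ln_powr)
    finally have "ln (c_nu \<nu> * \<epsilon> powr q / M powr (2 / (1 + \<nu>)) * A' powr (1 - q)) \<le> ln (a powr (2 - q))"
      using th by simp
    then show ?thesis using lhs_pos a unfolding q_def
      by (subst ln_le_cancel_iff[symmetric]) auto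
  qed
qed



lemma pw1: "(x::real) > 0 \<Longrightarrow> x / x powr (1 - g) = x powr g"
proof -
  assume x: "x > 0"
  have "x powr g = x powr (1 - (1 - g))" by simp
  also have "\<dots> = x powr 1 / x powr (1 - g)" by (rule powr_diff)
  finally show ?thesis using x by simp
qed

lemma pw2: "(x::real) > 0 \<Longrightarrow> 1 / x powr (1 - g) = x powr (g - 1)"
proof -
  assume x: "x > 0"
  have "x powr (g - 1) = x powr (- (1 - g))" by simp
  also have "\<dots> = inverse (x powr (1 - g))" by (rule powr_minus)
  finally show ?thesis by (simp add: inverse_eq_divide)
qed

lemma pw3: "(x::real) > 0 \<Longrightarrow> x powr (1 - g) * x powr (g - 1) = 1"
proof -
  assume x: "x > 0"
  have "x powr (1 - g) * x powr (g - 1) = x powr ((1 - g) + (g - 1))" by (rule powr_add[symmetric])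
  then show ?thesis using x by simp
qed

lemma accum:
  fixes A a :: "nat \<Rightarrow> real" and C e :: real
  assumes A0: "A 0 = 0" and An: "\<And>k. A (Suc k) = A k + a (Suc k)"
    and apos: "\<And>k. a (Suc k) > 0" and C: "C > 0" and e: "1 \<le> e" "e \<le> 2"
    and step: "\<And>k. C * A (Suc k) powr (e - 1) \<le> a (Suc k) powr e"
  shows "C * (real k / 2) powr e \<le> A k"
proof -
  have Anonneg: "A k \<ge> 0" for k
    by (induction k) (use A0 An apos in \<open>auto intro: add_nonneg_pos less_imp_le\<close>)
  define \<gamma> where "\<gamma> = 1 / e"
  have g: "0 < \<gamma>" "\<gamma> \<le> 1" "1/2 \<le> \<gamma>" "\<gamma> * e = 1" unfolding \<gamma>_def using e by auto
  have claim: "real k * C powr \<gamma> / 2 \<le> A k powr \<gamma>" for k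
  proof (induction k)
    case 0 then show ?case by simp
  next
    case (Suc k)
    define A1 where "A1 = A (Suc k)"
    define b where "b = a (Suc k)"
    have b: "b > 0" unfolding b_def by (rule apos)
    have A1: "A1 = A k + b" "A1 > 0" unfolding A1_def b_def using An[of k] Anonneg[of k] apos[of k] by auto
    have i: "C powr \<gamma> * A1 powr (1 - \<gamma>) \<le> b"
    proof -
      have st: "C * A1 powr (e - 1) \<le> b powr e" using step[of k] unfolding A1_def b_def .
      have "ln (C * A1 powr (e - 1)) \<le> ln (b powr e)"
        using st C A1 b by (subst ln_le_cancel_iff) auto
      then have "ln C + (e - 1) * ln A1 \<le> e * ln b" using C A1 b by (simp add: ln_mult ln_powr)
      then have "\<gamma> * (ln C + (e - 1) * ln A1) \<le> \<gamma> * (e * ln b)" using g by simp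
      moreover have "\<gamma> * (ln C + (e - 1) * ln A1) = \<gamma> * ln C + (1 - \<gamma>) * ln A1"
        using g(4) by (simp add: algebra_simps)
      moreover have "\<gamma> * (e * ln b) = ln b" using g(4) by (simp add: mult.assoc[symmetric])
      ultimately have "ln (C powr \<gamma> * A1 powr (1 - \<gamma>)) \<le> ln b"
        using C A1 by (simp add: ln_mult ln_powr)
      then show ?thesis using C A1 b by (subst ln_le_cancel_iff[symmetric]) auto
    qed
    have ii: "A k powr \<gamma> \<le> A1 powr \<gamma> - \<gamma> * b * A1 powr (\<gamma> - 1)"
    proof (cases "A k = 0")
      case True
      then have "A1 = b" using A1 by simp
      have "b powr \<gamma> = b powr (1 + (\<gamma> - 1))" by simp
      also have "\<dots> = b powr 1 * b powr (\<gamma> - 1)" by (rule powr_add)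
      finally have "b * b powr (\<gamma> - 1) = b powr \<gamma>" using b by simp
      then have "A1 powr \<gamma> - \<gamma> * b * A1 powr (\<gamma> - 1) = (1 - \<gamma>) * b powr \<gamma>"
        using \<open>A1 = b\<close> by (simp add: algebra_simps)
      then show ?thesis using True g by simp
    next
      case False
      then have Ak: "A k > 0" using Anonneg[of k] by simp
      have "A k powr \<gamma> * A1 powr (1 - \<gamma>) \<le> \<gamma> * A k + (1 - \<gamma>) * A1"
        by (rule Youngs_inequality_0) (use g Ak A1 in auto)
      also have "\<dots> = A1 - \<gamma> * b" using A1 by (simp add: algebra_simps)
      finally have "A k powr \<gamma> \<le> (A1 - \<gamma> * b) / A1 powr (1 - \<gamma>)"
        using A1 by (simp add: field_simps)
      also have "\<dots> = A1 powr \<gamma> - \<gamma> * b * A1 powr (\<gamma> - 1)"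
      proof -
        have "A1 / A1 powr (1 - \<gamma>) = A1 powr \<gamma>" using A1 by (simp add: pw1)
        moreover have "1 / A1 powr (1 - \<gamma>) = A1 powr (\<gamma> - 1)" using A1 by (simp add: pw2)
        ultimately show ?thesis by (simp add: diff_divide_distrib) (metis times_divide_eq_right mult.right_neutral)
      qed
      finally show ?thesis .
    qed
    have iii: "C powr \<gamma> / 2 \<le> \<gamma> * b * A1 powr (\<gamma> - 1)"
    proof -
      have "C powr \<gamma> * A1 powr (1 - \<gamma>) * A1 powr (\<gamma> - 1) \<le> b * A1 powr (\<gamma> - 1)"
        using i A1 by (simp add: mult_right_mono)
      moreover have "A1 powr (1 - \<gamma>) * A1 powr (\<gamma> - 1) = 1" using A1 by (simp add: pw3)
      ultimately have "C powr \<gamma> \<le> b * A1 powr (\<gamma> - 1)" by (simp add: mult.assoc)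
      moreover have "0 \<le> C powr \<gamma>" by simp
      ultimately have P: "C powr \<gamma> \<le> b * A1 powr (\<gamma> - 1)" "0 \<le> b * A1 powr (\<gamma> - 1)" using b by auto
      have "(1/2) * (b * A1 powr (\<gamma> - 1)) \<le> \<gamma> * (b * A1 powr (\<gamma> - 1))"
        by (rule mult_right_mono[OF g(3) P(2)])
      then show ?thesis using P(1) by (simp add: mult.assoc)
    qed
    show ?case using Suc.IH ii iii unfolding A1_def[symmetric] by (simp add: distrib_right)
  qed
  show ?thesis
  proof (cases "k = 0")
    case True then show ?thesis using A0 e by simp
  next
    case False
    have "(real k * C powr \<gamma> / 2) powr e \<le> (A k powr \<gamma>) powr e"
      using claim[of k] e by (intro powr_mono2) auto
    also have "\<dots> = A k" using g(4) Anonneg[of k] by (simp add: powr_powr)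
    also have "(real k * C powr \<gamma> / 2) powr e = C * (real k / 2) powr e"
      using C g(4) by (simp add: powr_mult powr_powr powr_divide)
    finally show ?thesis .
  qed
qed



lemma rearr: "(c::real) * (K * E) / (T * P) = c * E / P * (K / T)"
  by (simp add: divide_inverse inverse_mult_distrib algebra_simps)

lemma rate_conv:
  assumes "0 \<le> \<nu>"
  shows "rate_bound M \<nu> \<epsilon> k = (c_nu \<nu> * \<epsilon> powr ((1 - \<nu>) / (1 + \<nu>)) / M powr (2 / (1 + \<nu>)))
           * (real k / 2) powr (2 - (1 - \<nu>) / (1 + \<nu>))"
proof -
  have e: "(1 + 3 * \<nu>) / (1 + \<nu>) = 2 - (1 - \<nu>) / (1 + \<nu>)" using assms by (simp add: field_simps)
  have "(real k / 2) powr (2 - (1 - \<nu>) / (1 + \<nu>)) = real k powr (2 - (1 - \<nu>) / (1 + \<nu>)) / 2 powr (2 - (1 - \<nu>) / (1 + \<nu>))"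
    by (simp add: powr_divide)
  then show ?thesis unfolding rate_bound_def e by (simp only: rearr)
qed

lemma holder_extract:
  assumes fin: "holder_const nrm f \<nu> < \<infinity>"
  defines "M0 \<equiv> real_of_ereal (holder_const nrm f \<nu>)"
  shows "0 \<le> M0 \<and> (\<forall>x y gx gy. gx \<in> Dset f x \<longrightarrow> gy \<in> Dset f y \<longrightarrow>
       dual_norm nrm (gx - gy) \<le> M0 * hpow (nrm (x - y)) \<nu>)"
proof -
  define Ms where "Ms = {M. 0 \<le> M \<and> (\<forall>x y gx gy. gx \<in> Dset f x \<longrightarrow> gy \<in> Dset f y \<longrightarrow>
       dual_norm nrm (gx - gy) \<le> M * hpow (nrm (x - y)) \<nu>)}"
  have hc: "holder_const nrm f \<nu> = Inf (ereal ` Ms)" unfolding holder_const_def Ms_def ..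
  have ne: "Ms \<noteq> {}"
  proof
    assume "Ms = {}"
    then have "holder_const nrm f \<nu> = \<infinity>" unfolding hc by (simp add: top_ereal_def)
    then show False using fin by simp
  qed
  have bdd: "bdd_below Ms" unfolding Ms_def by (rule bdd_belowI[of _ 0]) auto
  have "ereal (Inf Ms) = Inf (ereal ` Ms)" using ereal_Inf'[OF bdd ne] by simp
  then have M0: "M0 = Inf Ms" unfolding M0_def hc[symmetric] by (metis real_of_ereal.simps(1) hc)
  have "0 \<le> Inf Ms" by (rule cInf_greatest[OF ne]) (auto simp: Ms_def)
  moreover have "dual_norm nrm (gx - gy) \<le> Inf Ms * hpow (nrm (x - y)) \<nu>"
    if "gx \<in> Dset f x" "gy \<in> Dset f y" for x y gx gy
  proof -
    have hp: "hpow (nrm (x - y)) \<nu> \<ge> 0" unfolding hpow_def by simp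
    show ?thesis
    proof (cases "hpow (nrm (x - y)) \<nu> = 0")
      case True
      obtain M where "M \<in> Ms" using ne by blast
      then have "dual_norm nrm (gx - gy) \<le> M * hpow (nrm (x - y)) \<nu>" using that unfolding Ms_def by blast
      then show ?thesis using True by simp
    next
      case False
      then have hpp: "hpow (nrm (x - y)) \<nu> > 0" using hp by simp
      have "dual_norm nrm (gx - gy) / hpow (nrm (x - y)) \<nu> \<le> Inf Ms"
      proof (rule cInf_greatest[OF ne])
        fix M assume "M \<in> Ms"
        then have "dual_norm nrm (gx - gy) \<le> M * hpow (nrm (x - y)) \<nu>" using that unfolding Ms_def by auto
        then show "dual_norm nrm (gx - gy) / hpow (nrm (x - y)) \<nu> \<le> M" using hpp by (simp add: divide_le_eq)
      qed
      then show ?thesis using hpp by (simp add: divide_le_eq)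
    qed
  qed
  ultimately show ?thesis unfolding M0 by blast
qed


theorem mainTheorem9:
  fixes nrm :: "'a::euclidean_space \<Rightarrow> real"
    and f d :: "'a \<Rightarrow> real" and gd :: "'a \<Rightarrow> 'a" and sharp :: "'a \<Rightarrow> 'a"
    and \<epsilon> :: real
    and x v y g :: "nat \<Rightarrow> 'a" and \<beta> h a A :: "nat \<Rightarrow> real"
  assumes norm: "is_norm nrm"
    and sharp: "\<And>q. nrm (sharp q) \<le> 1 \<and> q \<bullet> sharp q = dual_norm nrm q"
    and prox: "prox_function nrm d gd"
    and f_class: "convex_on UNIV f \<or> C1_fun f"
    and eps: "\<epsilon> > 0"
    and A0: "A 0 = 0" and v0: "v 0 = x 0"
    and beta: "\<And>k. \<beta> k \<in> {0..1} \<and>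
                 (\<forall>b\<in>{0..1}. f (v k + \<beta> k *\<^sub>R (x k - v k)) \<le> f (v k + b *\<^sub>R (x k - v k)))"
    and y_def: "\<And>k. y k = v k + \<beta> k *\<^sub>R (x k - v k)"
    and g_sel: "\<And>k. g k \<in> Dset f (y k) \<and> g k \<bullet> (v k - y k) \<ge> 0"
    and g_nz: "\<And>k. g k \<noteq> 0"
    and h_min: "\<And>k. h (Suc k) \<ge> 0 \<and>
                 (\<forall>t\<ge>0. f (y k - h (Suc k) *\<^sub>R sharp (g k)) \<le> f (y k - t *\<^sub>R sharp (g k)))"
    and x_next: "\<And>k. x (Suc k) = y k - h (Suc k) *\<^sub>R sharp (g k)"
    and a_next: "\<And>k. let S = {b. A k + b \<noteq> 0 \<and>
                   f (y k) - b\<^sup>2 / (2 * (A k + b)) * (dual_norm nrm (g k))\<^sup>2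
                     + \<epsilon> * b / (2 * (A k + b)) = f (x (Suc k))}
                 in a (Suc k) \<in> S \<and> (\<forall>b\<in>S. b \<le> a (Suc k))"
    and A_next: "\<And>k. A (Suc k) = A k + a (Suc k)"
    and v_next: "\<And>k z. psi_fun d gd f (x 0) a y g (Suc k) (v (Suc k))
                          \<le> psi_fun d gd f (x 0) a y g (Suc k) z"
  shows "\<forall>k. (\<forall>z. psi_fun d gd f (x 0) a y g k (v k) \<le> psi_fun d gd f (x 0) a y g k z)
           \<and> A k * f (x k) \<le> psi_fun d gd f (x 0) a y g k (v k) + A k * \<epsilon> / 2
           \<and> (\<forall>\<nu>\<in>{0..1}. holder_const nrm f \<nu> < \<infinity> \<longrightarrow>
                 rate_bound (real_of_ereal (holder_const nrm f \<nu>)) \<nu> \<epsilon> k \<le> A k)"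
proof -
  define psi where "psi = psi_fun d gd f (x 0) a y g"
  define G where "G k = dual_norm nrm (g k)" for k
  define s where "s k = sharp (g k)" for k
  have Gpos: "G k > 0" for k unfolding G_def using dual_pos[OF norm g_nz[of k]] .
  have gs: "g k \<bullet> s k = G k" for k unfolding G_def s_def using sharp[of "g k"] by simp
  have s1: "nrm (s k) \<le> 1" for k unfolding s_def using sharp by simp
  have hmin: "f (x (Suc k)) \<le> f (y k - t *\<^sub>R s k)" if "t \<ge> 0" for k t
    using h_min[of k] x_next[of k] that unfolding s_def by simp
  have Fle: "f (x (Suc k)) \<le> f (y k)" for k using hmin[of 0 k] by simp
  have aS: "A k + a (Suc k) \<noteq> 0 \<and> f (y k) - (a (Suc k))\<^sup>2 / (2 * (A k + a (Suc k))) * (G k)\<^sup>2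
      + \<epsilon> * a (Suc k) / (2 * (A k + a (Suc k))) = f (x (Suc k))" for k
    using a_next[of k] unfolding Let_def G_def by auto
  have amax: "b \<le> a (Suc k)" if "A k + b \<noteq> 0" "f (y k) - b\<^sup>2 / (2 * (A k + b)) * (G k)\<^sup>2
      + \<epsilon> * b / (2 * (A k + b)) = f (x (Suc k))" for k b
    using a_next[of k] that unfolding Let_def G_def by auto
  have apos_of: "a (Suc k) > 0" if Akn: "A k \<ge> 0" for k
  proof -
    obtain b where "b > 0" "A k + b \<noteq> 0" "f (y k) - b\<^sup>2 / (2 * (A k + b)) * (G k)\<^sup>2
      + \<epsilon> * b / (2 * (A k + b)) = f (x (Suc k))"
      using root_pos[OF Akn Fle[of k] Gpos[of k] eps] by blast
    then show ?thesis using amax[of k b] by simp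
  qed
  have Ann: "A k \<ge> 0" for k
  proof (induction k)
    case 0 then show ?case using A0 by simp
  next
    case (Suc k) then show ?case using A_next[of k] apos_of[of k] by simp
  qed
  have apos: "a (Suc k) > 0" for k using apos_of Ann by blast
  have A1pos: "A (Suc k) > 0" for k using A_next[of k] Ann[of k] apos[of k] by simp
  have eq2: "(a (Suc k))\<^sup>2 * (G k)\<^sup>2 = 2 * A (Suc k) * (f (y k) - f (x (Suc k))) + \<epsilon> * a (Suc k)" for k
    using aS[of k] eq_mult[of "A k" "a (Suc k)" "f (y k)" "G k" \<epsilon> "f (x (Suc k))"] A_next[of k] by simp
  have vmin: "psi k (v k) \<le> psi k z" for k z
  proof (cases k)
    case 0
    have "d z \<ge> d (x 0) + gd (x 0) \<bullet> (z - x 0) + (1/2) * (nrm (z - x 0))\<^sup>2"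
      using prox unfolding prox_function_def by blast
    moreover have "0 \<le> (1/2) * (nrm (z - x 0))\<^sup>2" by simp
    ultimately have "0 \<le> bregman d gd z (x 0)" unfolding bregman_def by linarith
    then show ?thesis using 0 v0 unfolding psi_def psi_fun_def by (simp add: bregman_def)
  next
    case (Suc j) then show ?thesis using v_next unfolding psi_def by simp
  qed
  have SC: "psi k (v k) + (1/2) * (nrm (z - v k))\<^sup>2 \<le> psi k z" for k z
  proof -
    obtain l c where lc: "\<forall>z. psi k z = d z + l \<bullet> z + c"
      using psi_affine[of d gd f "x 0" a y g k] unfolding psi_def by blast
    show ?thesis
    proof (rule sc_min[OF norm prox, of "psi k" l c])
      show "\<And>z. psi k z = d z + l \<bullet> z + c" using lc by blast
      show "\<And>z. psi k (v k) \<le> psi k z" by (rule vmin)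
    qed
  qed
  have main2: "A k * f (x k) \<le> psi k (v k) + A k * \<epsilon> / 2" for k
  proof (induction k)
    case 0 then show ?case using vmin[of 0 "x 0"] A0 v0
      by (simp add: psi_def psi_fun_def bregman_def)
  next
    case (Suc k)
    define Ak b A1 vk v1 yk gk Gk N where "Ak = A k" "b = a (Suc k)" "A1 = A (Suc k)" "vk = v k"
      "v1 = v (Suc k)" "yk = y k" "gk = g k" "Gk = G k" "N = nrm (v1 - vk)"
    have p1: "psi (Suc k) v1 = psi k v1 + b * (f yk + gk \<bullet> (v1 - yk))"
      unfolding psi_def psi_fun_def Ak_b_A1_vk_v1_yk_gk_Gk_N_def by simp
    have p2: "psi k vk + (1/2) * N\<^sup>2 \<le> psi k v1" using SC[of k v1] unfolding Ak_b_A1_vk_v1_yk_gk_Gk_N_def by simp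
    have IH: "Ak * f (x k) \<le> psi k vk + Ak * \<epsilon> / 2" using Suc.IH unfolding Ak_b_A1_vk_v1_yk_gk_Gk_N_def .
    have fy: "f yk \<le> f (x k)"
    proof -
      have "f (v k + \<beta> k *\<^sub>R (x k - v k)) \<le> f (v k + 1 *\<^sub>R (x k - v k))"
        using beta[of k] by (metis atLeastAtMost_iff order_refl zero_le_one)
      then show ?thesis using y_def[of k] unfolding Ak_b_A1_vk_v1_yk_gk_Gk_N_def by simp
    qed
    have Af: "Ak * f yk \<le> Ak * f (x k)" using fy Ann[of k] unfolding Ak_b_A1_vk_v1_yk_gk_Gk_N_def by (simp add: mult_left_mono)
    have gv: "gk \<bullet> (vk - yk) \<ge> 0" using g_sel[of k] unfolding Ak_b_A1_vk_v1_yk_gk_Gk_N_def by simp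
    have gw: "gk \<bullet> (v1 - vk) \<ge> - (Gk * N)"
    proof -
      have "gk \<bullet> (vk - v1) \<le> Gk * nrm (vk - v1)"
        using dual_ineq[OF norm] unfolding Ak_b_A1_vk_v1_yk_gk_Gk_N_def G_def by blast
      moreover have "nrm (vk - v1) = N" unfolding Ak_b_A1_vk_v1_yk_gk_Gk_N_def
        using nrm_minus[OF norm, of "v (Suc k) - v k"] by simp
      moreover have "gk \<bullet> (vk - v1) = - (gk \<bullet> (v1 - vk))" by (simp add: inner_diff_right)
      ultimately show ?thesis by simp
    qed
    have split: "gk \<bullet> (v1 - yk) = gk \<bullet> (vk - yk) + gk \<bullet> (v1 - vk)" by (simp add: inner_diff_right)
    have bpos: "b > 0" unfolding Ak_b_A1_vk_v1_yk_gk_Gk_N_def by (rule apos)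
    have bg: "b * (gk \<bullet> (v1 - yk)) \<ge> - (b * Gk * N)"
    proof -
      have "gk \<bullet> (v1 - yk) \<ge> - (Gk * N)" using split gv gw by linarith
      then have "b * (gk \<bullet> (v1 - yk)) \<ge> b * (- (Gk * N))" using bpos by (intro mult_left_mono) auto
      then show ?thesis by simp
    qed
    have sq: "(1/2) * N\<^sup>2 - b * Gk * N \<ge> - ((b * Gk)\<^sup>2 / 2)"
    proof -
      have "0 \<le> (N - b * Gk)\<^sup>2" by simp
      then show ?thesis by (simp add: power2_eq_square algebra_simps)
    qed
    have eqA: "A1 * f yk - (b * Gk)\<^sup>2 / 2 = A1 * f (x (Suc k)) - \<epsilon> * b / 2"
      using eq2[of k] unfolding Ak_b_A1_vk_v1_yk_gk_Gk_N_def by (simp add: power_mult_distrib algebra_simps)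
    have A1d: "A1 = Ak + b" unfolding Ak_b_A1_vk_v1_yk_gk_Gk_N_def by (rule A_next)
    have "psi (Suc k) v1 \<ge> Ak * f yk + b * f yk - (b * Gk)\<^sup>2 / 2 - Ak * \<epsilon> / 2"
      using p1 p2 IH Af bg sq by (simp add: distrib_left)
    also have "Ak * f yk + b * f yk = A1 * f yk" using A1d by (simp add: distrib_right)
    finally have "psi (Suc k) v1 \<ge> A1 * f (x (Suc k)) - \<epsilon> * b / 2 - Ak * \<epsilon> / 2" using eqA by linarith
    then show ?case unfolding Ak_b_A1_vk_v1_yk_gk_Gk_N_def[symmetric] using A1d by (simp add: algebra_simps add_divide_distrib)
  qed
  have rate: "rate_bound (real_of_ereal (holder_const nrm f \<nu>)) \<nu> \<epsilon> k \<le> A k"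
    if nu: "\<nu> \<in> {0..1}" and fin: "holder_const nrm f \<nu> < \<infinity>" for \<nu> k
  proof -
    define M0 where "M0 = real_of_ereal (holder_const nrm f \<nu>)"
    have HM: "0 \<le> M0" "\<And>x y gx gy. gx \<in> Dset f x \<Longrightarrow> gy \<in> Dset f y \<Longrightarrow>
       dual_norm nrm (gx - gy) \<le> M0 * hpow (nrm (x - y)) \<nu>"
      using holder_extract[OF fin] unfolding M0_def by blast+
    have nu0: "0 \<le> \<nu>" "\<nu> \<le> 1" using nu by auto
    show ?thesis
    proof (cases "M0 = 0")
      case True
      then show ?thesis unfolding M0_def[symmetric] rate_bound_def using Ann[of k] nu0 by simp
    next
      case False
      then have Mp: "M0 > 0" using HM(1) by simp
      have desc: "t * G j - M0 * t powr (1 + \<nu>) / (1 + \<nu>) \<le> f (y j) - f (x (Suc j))" if t: "t \<ge> 0" for j t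
      proof -
        have "f (y j - t *\<^sub>R s j) \<le> f (y j) - t * (g j \<bullet> s j) + M0 * t powr (1 + \<nu>) / (1 + \<nu>)"
        proof (cases "convex_on UNIV f")
          case True
          show ?thesis
          proof (rule descent_convex[OF norm True _ HM(1) nu0(1) _ s1 t])
            show "\<And>x y gx gy. gx \<in> subgrads f x \<Longrightarrow> gy \<in> subgrads f y \<Longrightarrow>
                dual_norm nrm (gx - gy) \<le> M0 * hpow (nrm (x - y)) \<nu>"
              using HM(2) True unfolding Dset_def by simp
            show "g j \<in> subgrads f (y j)" using g_sel[of j] True unfolding Dset_def by simp
          qed
        next
          case False
          then have C1: "C1_fun f" using f_class by simp
          show ?thesis
          proof (rule descent_C1[OF norm C1 _ HM(1) nu0(1) _ s1 t])
            show "\<And>x y gx gy. gx \<in> grads f x \<Longrightarrow> gy \<in> grads f y \<Longrightarrow>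
                dual_norm nrm (gx - gy) \<le> M0 * hpow (nrm (x - y)) \<nu>"
              using HM(2) False unfolding Dset_def by simp
            show "g j \<in> grads f (y j)" using g_sel[of j] False unfolding Dset_def by simp
          qed
        qed
        then show ?thesis using hmin[OF t, of j] gs[of j] by simp
      qed
      define q where "q = (1 - \<nu>) / (1 + \<nu>)"
      define C where "C = c_nu \<nu> * \<epsilon> powr q / M0 powr (2 / (1 + \<nu>))"
      have q: "0 \<le> q" "q \<le> 1" unfolding q_def using nu0 by (auto simp: field_simps)
      have cpos: "c_nu \<nu> > 0" unfolding c_nu_def using nu0 by auto
      have Cpos: "C > 0" unfolding C_def using cpos eps Mp by simp
      have step: "C * A (Suc j) powr ((2 - q) - 1) \<le> a (Suc j) powr (2 - q)" for j
      proof -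
        have "C * A (Suc j) powr (1 - q) \<le> a (Suc j) powr (2 - q)"
          unfolding C_def q_def
          by (rule step_rate[OF apos A1pos Gpos eps Mp nu0 eq2 desc])
        moreover have "(2 - q) - 1 = 1 - q" by simp
        ultimately show ?thesis by simp
      qed
      have "C * (real k / 2) powr (2 - q) \<le> A k"
        by (rule accum[OF A0 A_next apos Cpos _ _ step]) (use q in auto)
      then show ?thesis unfolding M0_def[symmetric] rate_conv[OF nu0(1)] C_def q_def .
    qed
  qed
  show ?thesis using vmin main2 rate unfolding psi_def by blast
qed

end
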